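(* Let $P=(V,\leq)$ be a poset whose incomparability graph is connected and locally finite. Then every chain of $P$ is order-embeddable into the chain $\mathbb{Z}$ of integers.
   Context: The incomparability graph of $P$ has vertex set $V$ and edges the pairs of distinct incomparable elements. A graph is locally finite if every vertex has finitely many neighbours. A chain of $P$ is a subset of pairwise comparable elements, with the induced order. *)

theory Defs
  imports Main
begin

definition partial_order_on' :: "'a set \<Rightarrow> ('a \<Rightarrow> 'a \<Rightarrow> bool) \<Rightarrow> bool" where
  "partial_order_on' V le \<longleftrightarrow>
     (\<forall>x\<in>V. le x x) \<and>
     (\<forall>x\<in>V. \<forall>y\<in>V. le x y \<and> le y x \<longrightarrow> x = y) \<and>
     (\<forall>x\<in>V. \<forall>y\<in>V. \<forall>z\<in>V. le x y \<and> le y z \<longrightarrow> le x z)"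

definition comparable :: "('a \<Rightarrow> 'a \<Rightarrow> bool) \<Rightarrow> 'a \<Rightarrow> 'a \<Rightarrow> bool" where
  "comparable le x y \<longleftrightarrow> le x y \<or> le y x"

definition incomp_edge :: "'a set \<Rightarrow> ('a \<Rightarrow> 'a \<Rightarrow> bool) \<Rightarrow> 'a \<Rightarrow> 'a \<Rightarrow> bool" where
  "incomp_edge V le x y \<longleftrightarrow> x \<in> V \<and> y \<in> V \<and> x \<noteq> y \<and> \<not> comparable le x y"

definition graph_connected :: "'a set \<Rightarrow> ('a \<Rightarrow> 'a \<Rightarrow> bool) \<Rightarrow> bool" where
  "graph_connected V E \<longleftrightarrow>
     (\<forall>x\<in>V. \<forall>y\<in>V. \<exists>p. p \<noteq> [] \<and> hd p = x \<and> last p = y \<and> set p \<subseteq> V \<and>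
        (\<forall>i. Suc i < length p \<longrightarrow> E (p ! i) (p ! Suc i)))"

definition locally_finite :: "'a set \<Rightarrow> ('a \<Rightarrow> 'a \<Rightarrow> bool) \<Rightarrow> bool" where
  "locally_finite V E \<longleftrightarrow> (\<forall>x\<in>V. finite {y\<in>V. E x y})"

definition is_chain :: "'a set \<Rightarrow> ('a \<Rightarrow> 'a \<Rightarrow> bool) \<Rightarrow> 'a set \<Rightarrow> bool" where
  "is_chain V le C \<longleftrightarrow> C \<subseteq> V \<and> (\<forall>x\<in>C. \<forall>y\<in>C. comparable le x y)"

definition order_embedding :: "'a set \<Rightarrow> ('a \<Rightarrow> 'a \<Rightarrow> bool) \<Rightarrow> 'b set \<Rightarrow> ('b \<Rightarrow> 'b \<Rightarrow> bool) \<Rightarrow> ('a \<Rightarrow> 'b) \<Rightarrow> bool" where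
  "order_embedding C le B leB f \<longleftrightarrow> f ` C \<subseteq> B \<and> inj_on f C \<and>
     (\<forall>x\<in>C. \<forall>y\<in>C. le x y \<longleftrightarrow> leB (f x) (f y))"

end

theory Submission
  imports Defs
begin

lemma strict_mono_embed:
  fixes f :: "'a \<Rightarrow> int"
  assumes tot: "\<forall>a\<in>C. \<forall>b\<in>C. le a b \<or> le b a"
    and refl: "\<forall>a\<in>C. le a a"
    and sm: "\<And>a b. a \<in> C \<Longrightarrow> b \<in> C \<Longrightarrow> le a b \<Longrightarrow> a \<noteq> b \<Longrightarrow> f a < f b"
  shows "order_embedding C le UNIV (\<le>) f"
  unfolding order_embedding_def
proof (intro conjI)
  show "inj_on f C"
    by (metis inj_onI less_irrefl sm tot)
  show "\<forall>x\<in>C. \<forall>y\<in>C. le x y = (f x \<le> f y)"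
    by (metis less_le_not_le order_refl sm tot refl)
qed simp

lemma chain_embed:
  assumes anti: "\<forall>a\<in>C. \<forall>b\<in>C. le a b \<and> le b a \<longrightarrow> a = b"
    and trans: "\<forall>a\<in>C. \<forall>b\<in>C. \<forall>c\<in>C. le a b \<and> le b c \<longrightarrow> le a c"
    and tot: "\<forall>a\<in>C. \<forall>b\<in>C. le a b \<or> le b a"
    and refl: "\<forall>a\<in>C. le a a"
    and fin: "\<forall>a\<in>C. \<forall>b\<in>C. finite {z\<in>C. le a z \<and> le z b}"
  shows "\<exists>f::'a\<Rightarrow>int. order_embedding C le UNIV (\<le>) f"
proof (cases "C = {}")
  case True
  then show ?thesis by (auto simp: order_embedding_def)
next
  case False
  then obtain x0 where x0: "x0 \<in> C" by blast
  define I where "I a b = {z\<in>C. le a z \<and> le z b}" for a b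
  define f where "f z = (if le x0 z then int (card (I x0 z)) else - int (card (I z x0)))" for z
  have sm: "f a < f b" if a: "a \<in> C" and b: "b \<in> C" and ab: "le a b" "a \<noteq> b" for a b
  proof (cases "le x0 a")
    case True
    then have xb: "le x0 b" using trans x0 a b ab by blast
    have "I x0 a \<subset> I x0 b"
    proof
      show "I x0 a \<subseteq> I x0 b" unfolding I_def using trans a b ab by blast
      have "b \<in> I x0 b" unfolding I_def using b xb refl by blast
      moreover have "b \<notin> I x0 a" unfolding I_def using anti a b ab by blast
      ultimately show "I x0 a \<noteq> I x0 b" by blast
    qed
    then have "card (I x0 a) < card (I x0 b)"
      using fin x0 b unfolding I_def by (meson psubset_card_mono)
    then show ?thesis unfolding f_def using True xb by simp
  next
    case False
    note na = False
    show ?thesis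
    proof (cases "le x0 b")
      case True
      have "a \<in> I a x0" unfolding I_def using a refl tot x0 na by blast
      then have "card (I a x0) > 0" using fin a x0 unfolding I_def
        by (metis (no_types, lifting) card_gt_0_iff empty_iff)
      then show ?thesis unfolding f_def using True na by simp
    next
      case False
      have bx: "le b x0" using False tot b x0 by blast
      have "I b x0 \<subset> I a x0"
      proof
        show "I b x0 \<subseteq> I a x0" unfolding I_def using trans a b ab by blast
        have "a \<in> I a x0" unfolding I_def using a refl tot x0 na by blast
        moreover have "a \<notin> I b x0" unfolding I_def using anti a b ab by blast
        ultimately show "I b x0 \<noteq> I a x0" by blast
      qed
      then have "card (I b x0) < card (I a x0)"
        using fin x0 a unfolding I_def by (meson psubset_card_mono)
      then show ?thesis unfolding f_def using False na by simp
    qed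
  qed
  show ?thesis
    by (rule exI[of _ f], rule strict_mono_embed[OF tot refl sm])
qed

theorem mainTheorem5:
  fixes V :: "'a set" and le :: "'a \<Rightarrow> 'a \<Rightarrow> bool"
  assumes "partial_order_on' V le"
    and "graph_connected V (incomp_edge V le)"
    and "locally_finite V (incomp_edge V le)"
  shows "\<forall>C. is_chain V le C \<longrightarrow>
           (\<exists>f :: 'a \<Rightarrow> int. order_embedding C le UNIV (\<le>) f)"
proof (intro allI impI)
  fix C assume ch: "is_chain V le C"
  have CV: "C \<subseteq> V" using ch unfolding is_chain_def by blast
  have refl: "\<forall>x\<in>V. le x x" and anti: "\<forall>x\<in>V. \<forall>y\<in>V. le x y \<and> le y x \<longrightarrow> x = y"
    and trans: "\<forall>x\<in>V. \<forall>y\<in>V. \<forall>z\<in>V. le x y \<and> le y z \<longrightarrow> le x z"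
    using assms(1) unfolding partial_order_on'_def by blast+
  have finV: "finite {z\<in>V. le x z \<and> le z y}" if x: "x \<in> V" and y: "y \<in> V" for x y
  proof -
    obtain p where p: "p \<noteq> []" "hd p = x" "last p = y" "set p \<subseteq> V"
      and pe: "\<And>i. Suc i < length p \<Longrightarrow> incomp_edge V le (p ! i) (p ! Suc i)"
      using assms(2) x y unfolding graph_connected_def by blast
    define S where "S = set p \<union> (\<Union>v\<in>set p. {w\<in>V. incomp_edge V le v w})"
    have finS: "finite S" unfolding S_def
      using assms(3) p(4) unfolding locally_finite_def by auto
    have "{z\<in>V. le x z \<and> le z y} \<subseteq> S"
    proof
      fix z assume "z \<in> {z\<in>V. le x z \<and> le z y}"
      then have z: "z \<in> V" "le x z" "le z y" by auto
      show "z \<in> S"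
      proof (rule ccontr)
        assume nS: "z \<notin> S"
        have cmp: "\<And>v. v \<in> set p \<Longrightarrow> v \<noteq> z \<and> comparable le v z"
          using nS z(1) p(4) unfolding S_def incomp_edge_def by blast
        have "\<forall>i. i < length p \<longrightarrow> le (p ! i) z"
        proof
          fix i show "i < length p \<longrightarrow> le (p ! i) z"
          proof (induction i)
            case 0
            then show ?case using p z by (simp add: hd_conv_nth)
          next
            case (Suc i)
            show ?case
            proof
              assume si: "Suc i < length p"
              then have li: "le (p ! i) z" using Suc by simp
              have inV: "p ! i \<in> V" "p ! Suc i \<in> V" using si p(4) by auto
              have "comparable le (p ! Suc i) z" using cmp si by simp
              moreover have "\<not> le z (p ! Suc i)"
              proof
                assume "le z (p ! Suc i)"
                then have "le (p ! i) (p ! Suc i)" using trans li inV z(1) by blast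
                then show False using pe[OF si] unfolding incomp_edge_def comparable_def by blast
              qed
              ultimately show "le (p ! Suc i) z" unfolding comparable_def by blast
            qed
          qed
        qed
        then have "le y z" using p by (metis last_conv_nth length_greater_0_conv diff_less zero_less_one)
        then have "z = y" using anti z y by blast
        moreover have "y \<in> set p" using p by auto
        ultimately show False using cmp by blast
      qed
    qed
    then show ?thesis using finS finite_subset by blast
  qed
  show "\<exists>f :: 'a \<Rightarrow> int. order_embedding C le UNIV (\<le>) f"
  proof (rule chain_embed)
    show "\<forall>a\<in>C. \<forall>b\<in>C. le a b \<and> le b a \<longrightarrow> a = b" using anti CV by blast
    show "\<forall>a\<in>C. \<forall>b\<in>C. \<forall>c\<in>C. le a b \<and> le b c \<longrightarrow> le a c" using trans CV by blast
    show "\<forall>a\<in>C. \<forall>b\<in>C. le a b \<or> le b a" using ch unfolding is_chain_def comparable_def by blast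
    show "\<forall>a\<in>C. le a a" using refl CV by blast
    show "\<forall>a\<in>C. \<forall>b\<in>C. finite {z\<in>C. le a z \<and> le z b}"
    proof (intro ballI)
      fix a b assume "a \<in> C" "b \<in> C"
      then have "finite {z\<in>V. le a z \<and> le z b}" using finV CV by blast
      then show "finite {z\<in>C. le a z \<and> le z b}"
        by (rule finite_subset[rotated]) (use CV in blast)
    qed
  qed
qed

end
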